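(* For every nonnegative integer $n$, $$\sum_{k=0}^{\infty}(-1)^k(4k+1)\,\frac{(-n)_k\,(-2n-\tfrac12)_k\,(\tfrac12)_k}{k!\,(n+\tfrac32)_k\,(2n+2)_k}=\left(\frac{2^2}{3^3}\right)^n\frac{(\tfrac32)_n^2}{(\tfrac43)_n(\tfrac23)_n}.$$ (The sum is finite, since $(-n)_k=0$ for $k>n$.)
   Context: $(a)_j=\Gamma(a+j)/\Gamma(a)=a(a+1)\cdots(a+j-1)$ denotes the rising factorial (Pochhammer symbol), with $(a)_0=1$. *)

theory Defs
  imports "HOL-Analysis.Analysis"
begin

end

theory Submission
  imports Defs
begin

definition PP :: "real \<Rightarrow> real \<Rightarrow> real" where
 "PP x y = (675/1)*x^0*y^0 + (135/2)*x^0*y^1 + (-1980/1)*x^0*y^2 + (2691/2)*x^0*y^3 + (192/1)*x^0*y^4 + (-324/1)*x^0*y^5 + (24/1)*x^0*y^7 + (5580/1)*x^1*y^0 + (4653/2)*x^1*y^1 + (-29505/2)*x^1*y^2 + (6870/1)*x^1*y^3 + (1588/1)*x^1*y^4 + (-1032/1)*x^1*y^5 + (-72/1)*x^1*y^6 + (32/1)*x^1*y^7 + (19662/1)*x^2*y^0 + (13911/1)*x^2*y^1 + (-44945/1)*x^2*y^2 + (13936/1)*x^2*y^3 + (11380/3)*x^2*y^4 + (-1160/1)*x^2*y^5 + (-96/1)*x^2*y^6 + (32/3)*x^2*y^7 + (38704/1)*x^3*y^0 + (37684/1)*x^3*y^1 + (-219844/3)*x^3*y^2 + (14448/1)*x^3*y^3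 + (3960/1)*x^3*y^4 + (-1664/3)*x^3*y^5 + (-32/1)*x^3*y^6 + (46675/1)*x^4*y^0 + (56816/1)*x^4*y^1 + (-208568/3)*x^4*y^2 + (8072/1)*x^4*y^3 + (5744/3)*x^4*y^4 + (-96/1)*x^4*y^5 + (106156/3)*x^5*y^0 + (50960/1)*x^5*y^1 + (-115688/3)*x^5*y^2 + (6880/3)*x^5*y^3 + (352/1)*x^5*y^4 + (49492/3)*x^6*y^0 + (27120/1)*x^6*y^1 + (-34864/3)*x^6*y^2 + (256/1)*x^6*y^3 + (12992/3)*x^7*y^0 + (23776/3)*x^7*y^1 + (-1472/1)*x^7*y^2 + (1472/3)*x^8*y^0 + (2944/3)*x^8*y^1"
definition dd :: "real \<Rightarrow> real" where "dd x = (3*x+4)*(3*x+2)*(x+1)*(4*x+5)*(4*x+3)"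
definition rho :: "real \<Rightarrow> real" where "rho x = 4/27*(x+3/2)^2/((x+4/3)*(x+2/3))"
definition rH1 :: "real \<Rightarrow> real \<Rightarrow> real" where
  "rH1 x y = -(y-x-1)*(y-2*x-5/2)*(y+1/2)/((y+1)*(x+y+5/2)*(2*x+y+4))"
definition RF1 :: "real \<Rightarrow> real \<Rightarrow> real" where
  "RF1 x y = -(4*y+5)*(y-x-1)*(y-2*x-5/2)*(y+1/2)*(x+3/2)*(2*x+2)*(2*x+3)/((y+1)*(x+y+5/2)*(2*x+y+4))"
definition RF0 :: "real \<Rightarrow> real \<Rightarrow> real" where
  "RF0 x y = -(4*y+5)*(y-x-1)*(y-x)/(-x-1)*(y-2*x-5/2)*(y-2*x-3/2)*(y-2*x-1/2)/((2*x+5/2)*(2*x+3/2))*(y+1/2)*(2*x+y+3)/(y+1)"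

lemma core_abs:
  fixes x y a b c e f g h k :: real
  assumes "a \<noteq> 0" "b \<noteq> 0" "c\<noteq>0" "e\<noteq>0" "f\<noteq>0" "g\<noteq>0" "h\<noteq>0" "k\<noteq>0"
   and "a = y+1" "b = x+y+5/2" "c = 2*x+y+4" "e = -x-1" "f = 2*x+5/2" "g = 2*x+3/2" "h = (x+4/3)*(x+2/3)"
   and "k = (3*x+4)*(3*x+2)*(x+1)*(4*x+5)*(4*x+3)"
  shows "PP x (y+1) * (-(y-x-1)*(y-2*x-5/2)*(y+1/2)/(a*b*c)) / k - PP x y / k
   = -(4*y+5)*(y-x-1)*(y-2*x-5/2)*(y+1/2)*(x+3/2)*(2*x+2)*(2*x+3)/(a*b*c)
     - (4/27*(x+3/2)^2/h) * (-(4*y+5)*(y-x-1)*(y-x)/e*(y-2*x-5/2)*(y-2*x-3/2)*(y-2*x-1/2)/(f*g)*(y+1/2)*(2*x+y+3)/a)"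
proof -
  have "PP x (y+1) * (-(y-x-1)*(y-2*x-5/2)*(y+1/2)) * (h*e*f*g) - PP x y * (a*b*c*h*e*f*g)
     = k * (-(4*y+5)*(y-x-1)*(y-2*x-5/2)*(y+1/2)*(x+3/2)*(2*x+2)*(2*x+3)*(h*e*f*g)
       - (4/27*(x+3/2)^2) * (-(4*y+5)*(y-x-1)*(y-x)*(y-2*x-5/2)*(y-2*x-3/2)*(y-2*x-1/2)*(y+1/2)*(2*x+y+3)*b*c))"
    unfolding PP_def assms(9-16) by algebra
  note eq=this
  let ?D = "a*b*c*k*h*e*f*g"
  have L: "PP x (y+1) * (-(y-x-1)*(y-2*x-5/2)*(y+1/2)/(a*b*c)) / k - PP x y / k
     = (PP x (y+1) * (-(y-x-1)*(y-2*x-5/2)*(y+1/2)) * (h*e*f*g) - PP x y * (a*b*c*h*e*f*g)) / ?D"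
    using assms(1-8) by (simp add: field_simps)
  have R: "-(4*y+5)*(y-x-1)*(y-2*x-5/2)*(y+1/2)*(x+3/2)*(2*x+2)*(2*x+3)/(a*b*c)
     - (4/27*(x+3/2)^2/h) * (-(4*y+5)*(y-x-1)*(y-x)/e*(y-2*x-5/2)*(y-2*x-3/2)*(y-2*x-1/2)/(f*g)*(y+1/2)*(2*x+y+3)/a)
     = (k * (-(4*y+5)*(y-x-1)*(y-2*x-5/2)*(y+1/2)*(x+3/2)*(2*x+2)*(2*x+3)*(h*e*f*g)
       - (4/27*(x+3/2)^2) * (-(4*y+5)*(y-x-1)*(y-x)*(y-2*x-5/2)*(y-2*x-3/2)*(y-2*x-1/2)*(y+1/2)*(2*x+y+3)*b*c))) / ?D"
    using assms(1-8) by (simp add: field_simps)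
  show ?thesis unfolding L R eq ..
qed

lemma core:
  fixes x y :: real assumes "x \<ge> 0" "y \<ge> 0"
  shows "PP x (y+1) * rH1 x y / dd x - PP x y / dd x = RF1 x y - rho x * RF0 x y"
proof -
  have nz: "dd x \<noteq> 0" using assms by (simp add: dd_def)
  show ?thesis
    unfolding rH1_def RF1_def RF0_def rho_def
    using core_abs[of "y+1" "x+y+5/2" "2*x+y+4" "-x-1" "2*x+5/2" "2*x+3/2" "(x+4/3)*(x+2/3)" "dd x" y x] assms nz
    by (simp add: dd_def mult.assoc)
qed


definition FF :: "nat \<Rightarrow> nat \<Rightarrow> real" where
 "FF n k = (-1::real) ^ k * (4 * real k + 1) *
            (pochhammer (- real n) k * pochhammer (- 2 * real n - 1/2) k * pochhammer (1/2) k) /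
            (fact k * pochhammer (real n + 3/2) k * pochhammer (2 * real n + 2) k)"

definition W :: "nat \<Rightarrow> nat \<Rightarrow> real" where
 "W n m = (-1::real)^m * pochhammer (- real n - 1) m * pochhammer (-2*real n - 5/2) m * pochhammer (1/2) m
    / (fact m * pochhammer (real n + 3/2) (m+1) * pochhammer (2*real n + 2) (m+2))"

definition HH :: "nat \<Rightarrow> nat \<Rightarrow> real" where
 "HH n m = W n m * PP (real n) (real m) / dd (real n)"

lemma poch_nz: "(x::real) > 0 \<Longrightarrow> pochhammer x k \<noteq> 0"
  using pochhammer_pos[of x k] by simp

lemma rec2: "pochhammer (a::real) (Suc (Suc k)) = a*(a+1)*pochhammer (a+2) k"
proof -
  have "pochhammer a (Suc (Suc k)) = a * pochhammer (a+1) (Suc k)" by (rule pochhammer_rec)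
  also have "pochhammer (a+1) (Suc k) = (a+1) * pochhammer (a+1+1) k" by (rule pochhammer_rec)
  finally show ?thesis by (simp add: mult.assoc add.assoc)
qed

lemma solve: "(c::real) \<noteq> 0 \<Longrightarrow> P = c*Q \<Longrightarrow> P = R \<Longrightarrow> Q = R / c"
  by (simp add: field_simps)

lemma W_Suc: "W n (Suc m) = W n m * rH1 (real n) (real m)"
proof -
  define x where "x = real n"
  define y where "y = real m"
  have x0: "x \<ge> 0" "y \<ge> 0" by (auto simp: x_def y_def)
  have p1: "pochhammer (-x-1) (Suc m) = pochhammer (-x-1) m * (y-x-1)"
    by (simp add: pochhammer_Suc y_def)
  have p2: "pochhammer (-2*x-5/2) (Suc m) = pochhammer (-2*x-5/2) m * (y-2*x-5/2)"
    by (simp add: pochhammer_Suc y_def)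
  have p3: "pochhammer (1/2::real) (Suc m) = pochhammer (1/2) m * (y+1/2)"
    by (simp add: pochhammer_Suc y_def)
  have p4: "pochhammer (x+3/2) (Suc m + 1) = pochhammer (x+3/2) (m+1) * (x+y+5/2)"
    by (simp add: pochhammer_Suc[of _ "Suc m"] y_def)
  have p5: "pochhammer (2*x+2) (Suc m + 2) = pochhammer (2*x+2) (m+2) * (2*x+y+4)"
    by (simp add: pochhammer_Suc[of _ "Suc (Suc m)"] y_def)
  have p6: "fact (Suc m) = fact m * (y+1::real)" by (simp add: y_def)
  have nz: "pochhammer (x+3/2) (m+1) \<noteq> 0" "pochhammer (2*x+2) (m+2) \<noteq> 0" "(fact m::real) \<noteq> 0"
    "y+1 \<noteq> 0" "x+y+5/2 \<noteq> 0" "2*x+y+4 \<noteq> 0"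
    using x0 by (auto intro!: poch_nz)
  show ?thesis
    unfolding W_def rH1_def x_def[symmetric] y_def[symmetric]
    unfolding p1 p2 p3 p4 p5 p6
    using nz by (simp add: field_simps)
qed

lemma F1: "FF (Suc n) (Suc m) = W n m * RF1 (real n) (real m)"
proof -
  define x where "x = real n"
  define y where "y = real m"
  have x0: "x \<ge> 0" "y \<ge> 0" by (auto simp: x_def y_def)
  have a1: "- real (Suc n) = -x-1" "- 2 * real (Suc n) - 1/2 = -2*x-5/2"
     "real (Suc n) + 3/2 = x+5/2" "2 * real (Suc n) + 2 = 2*x+4" "real (Suc m) = y+1"
    by (simp_all add: x_def y_def)
  have p1: "pochhammer (-x-1) (Suc m) = pochhammer (-x-1) m * (y-x-1)"
    by (simp add: pochhammer_Suc y_def)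
  have p2: "pochhammer (-2*x-5/2) (Suc m) = pochhammer (-2*x-5/2) m * (y-2*x-5/2)"
    by (simp add: pochhammer_Suc y_def)
  have p3: "pochhammer (1/2::real) (Suc m) = pochhammer (1/2) m * (y+1/2)"
    by (simp add: pochhammer_Suc y_def)
  have p4: "pochhammer (x+5/2) (Suc m) = pochhammer (x+3/2) (m+1) * (x+y+5/2) / (x+3/2)"
  proof -
    have e1: "pochhammer (x+3/2) (Suc (Suc m)) = (x+3/2) * pochhammer (x+5/2) (Suc m)"
      by (simp add: pochhammer_rec[of "x+3/2"] add.assoc)
    have e2: "pochhammer (x+3/2) (Suc (Suc m)) = pochhammer (x+3/2) (m+1) * (x+y+5/2)"
      by (simp add: pochhammer_Suc[of _ "Suc m"] y_def)
    show ?thesis by (rule solve[OF _ e1 e2]) (use x0 in simp)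
  qed
  have p5: "pochhammer (2*x+4) (Suc m) = pochhammer (2*x+2) (m+2) * (2*x+y+4) / ((2*x+2)*(2*x+3))"
  proof -
    have e1: "pochhammer (2*x+2) (Suc (Suc (Suc m))) = (2*x+2)*(2*x+3) * pochhammer (2*x+4) (Suc m)"
      using rec2[of "2*x+2" "Suc m"] by (simp add: algebra_simps)
    have e2: "pochhammer (2*x+2) (Suc (Suc (Suc m))) = pochhammer (2*x+2) (m+2) * (2*x+y+4)"
      by (simp add: pochhammer_Suc[of _ "Suc (Suc m)"] y_def)
    show ?thesis by (rule solve[OF _ e1 e2]) (use x0 in simp)
  qed
  have p6: "fact (Suc m) = fact m * (y+1::real)" by (simp add: y_def)
  have nz: "pochhammer (x+3/2) (m+1) \<noteq> 0" "pochhammer (2*x+2) (m+2) \<noteq> 0" "(fact m::real) \<noteq> 0"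
    "y+1 \<noteq> 0" "x+y+5/2 \<noteq> 0" "2*x+y+4 \<noteq> 0" "x+3/2 \<noteq> 0" "2*x+2\<noteq>0" "2*x+3 \<noteq> 0"
    using x0 by (auto intro!: poch_nz)
  show ?thesis
    unfolding FF_def W_def RF1_def x_def[symmetric] y_def[symmetric] a1
    unfolding p1 p2 p3 p4 p5 p6
    using nz by (simp add: field_simps)
qed

lemma F0: "FF n (Suc m) = W n m * RF0 (real n) (real m)"
proof -
  define x where "x = real n"
  define y where "y = real m"
  have x0: "x \<ge> 0" "y \<ge> 0" by (auto simp: x_def y_def)
  have a1: "real (Suc m) = y+1"
    by (simp_all add: x_def y_def)
  have p1: "pochhammer (-x) (Suc m) = pochhammer (-x-1) m * (y-x-1)*(y-x)/(-x-1)"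
  proof -
    have e1: "pochhammer (-x-1) (Suc (Suc m)) = (-x-1) * pochhammer (-x) (Suc m)"
      by (simp add: pochhammer_rec[of "-x-1"])
    have e2: "pochhammer (-x-1) (Suc (Suc m)) = pochhammer (-x-1) m * (y-x-1)*(y-x)"
      by (simp add: pochhammer_Suc y_def algebra_simps)
    show ?thesis by (rule solve[OF _ e1 e2]) (use x0 in simp)
  qed
  have p2: "pochhammer (-2*x-1/2) (Suc m) = pochhammer (-2*x-5/2) m * (y-2*x-5/2)*(y-2*x-3/2)*(y-2*x-1/2)/((2*x+5/2)*(2*x+3/2))"
  proof -
    have e1: "pochhammer (-2*x-5/2) (Suc (Suc (Suc m))) = (2*x+5/2)*(2*x+3/2) * pochhammer (-2*x-1/2) (Suc m)"
      using rec2[of "-2*x-5/2" "Suc m"] by (simp add: algebra_simps)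
    have e2: "pochhammer (-2*x-5/2) (Suc (Suc (Suc m))) = pochhammer (-2*x-5/2) m * (y-2*x-5/2)*(y-2*x-3/2)*(y-2*x-1/2)"
      by (simp add: pochhammer_Suc y_def algebra_simps)
    show ?thesis by (rule solve[OF _ e1 e2]) (use x0 in simp)
  qed
  have p3: "pochhammer (1/2::real) (Suc m) = pochhammer (1/2) m * (y+1/2)"
    by (simp add: pochhammer_Suc y_def)
  have p5: "pochhammer (2*x+2) (Suc m) = pochhammer (2*x+2) (m+2) / (2*x+y+3)"
  proof -
    have e1: "pochhammer (2*x+2) (m+2) = pochhammer (2*x+2) (Suc m) * (2*x+y+3)"
      by (simp add: pochhammer_Suc[of _ "Suc m"] y_def)
    then show ?thesis using x0 by (simp add: field_simps)
  qed
  have p6: "fact (Suc m) = fact m * (y+1::real)" by (simp add: y_def)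
  have nz: "pochhammer (x+3/2) (m+1) \<noteq> 0" "pochhammer (2*x+2) (m+2) \<noteq> 0" "(fact m::real) \<noteq> 0"
    "y+1 \<noteq> 0" "2*x+y+3 \<noteq> 0" "-x-1 \<noteq> 0" "2*x+5/2\<noteq>0" "2*x+3/2 \<noteq> 0"
    using x0 by (auto intro!: poch_nz)
  have e: "- 2 * x - 1/2 = -2*x-1/2" by simp
  show ?thesis
    unfolding FF_def W_def RF0_def x_def[symmetric] y_def[symmetric] a1
    unfolding p1 p2 p3 p5 p6
    using nz by (simp add: field_simps)
qed

lemma HH_step: "HH n (Suc m) - HH n m = FF (Suc n) (Suc m) - rho (real n) * FF n (Suc m)"
proof -
  have nz: "dd (real n) \<noteq> 0" by (simp add: dd_def)
  have c: "PP (real n) (real m + 1) * rH1 (real n) (real m) / dd (real n) - PP (real n) (real m) / dd (real n)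
     = RF1 (real n) (real m) - rho (real n) * RF0 (real n) (real m)" by (rule core) auto
  have "HH n (Suc m) - HH n m = W n m * (PP (real n) (real m + 1) * rH1 (real n) (real m) / dd (real n) - PP (real n) (real m) / dd (real n))"
    unfolding HH_def W_Suc by (simp add: algebra_simps)
  also have "\<dots> = W n m * (RF1 (real n) (real m) - rho (real n) * RF0 (real n) (real m))" by (simp only: c)
  also have "\<dots> = FF (Suc n) (Suc m) - rho (real n) * FF n (Suc m)"
    unfolding F1[of n m] F0[of n m] by (simp add: algebra_simps)
  finally show ?thesis .
qed

lemma HH_0: "HH n 0 = FF (Suc n) 0 - rho (real n) * FF n 0"
proof -
  define x where "x = real n"
  have x0: "x \<ge> 0" by (simp add: x_def)
  have "HH n 0 = PP x 0 / ((x+3/2)*((2*x+2)*(2*x+3)) * dd x)"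
    unfolding HH_def W_def x_def[symmetric] by (simp add: pochhammer_Suc numeral_2_eq_2 algebra_simps)
  also have "\<dots> = 1 - rho x"
  proof -
    have p0: "PP x 0 = 675 + 5580*x + 19662*x^2 + 38704*x^3 + 46675*x^4 + 106156/3*x^5 + 49492/3*x^6 + 12992/3*x^7 + 1472/3*x^8"
      by (simp add: PP_def)
    have g: "\<And>A B h c::real. B \<noteq> 0 \<Longrightarrow> h \<noteq> 0 \<Longrightarrow> A*h = B*(h - c) \<Longrightarrow> A/B = 1 - c/h"
      by (simp add: field_simps)
    show ?thesis unfolding rho_def
      apply (rule g)
      using x0 apply (simp add: dd_def)
      using x0 apply simp
      unfolding dd_def p0 by algebra
  qed
  finally show ?thesis by (simp add: FF_def x_def)
qed

lemma tele: "(\<Sum>k\<le>m. FF (Suc n) k - rho (real n) * FF n k) = HH n m"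
proof (induction m)
  case 0 then show ?case using HH_0 by simp
next
  case (Suc m)
  then show ?case using HH_step[of n m] by simp
qed

lemma FF_zero: "k > n \<Longrightarrow> FF n k = 0"
  unfolding FF_def by (simp add: pochhammer_of_nat_eq_0_lemma)

lemma HH_zero: "HH n (n+2) = 0"
proof -
  have e: "- real n - 1 = - real (Suc n)" by simp
  have "pochhammer (- real n - 1) (n+2) = 0"
    unfolding e by (rule pochhammer_of_nat_eq_0_lemma) simp
  then show ?thesis unfolding HH_def W_def by simp
qed

definition T :: "nat \<Rightarrow> real" where "T n = (\<Sum>k\<le>n+2. FF n k)"

lemma T_suminf: "suminf (FF n) = T n"
  unfolding T_def by (rule suminf_finite) (auto intro: FF_zero)

lemma T_Suc: "T (Suc n) = rho (real n) * T n"
proof -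
  have "(\<Sum>k\<le>n+2. FF (Suc n) k - rho (real n) * FF n k) = 0" using tele[where m="n+2" and n=n] HH_zero by simp
  moreover have "(\<Sum>k\<le>n+2. FF (Suc n) k - rho (real n) * FF n k) = (\<Sum>k\<le>n+2. FF (Suc n) k) - rho (real n) * T n"
    unfolding T_def by (simp only: sum_subtractf sum_distrib_left)
  ultimately have a: "(\<Sum>k\<le>n+2. FF (Suc n) k) = rho (real n) * T n" by simp
  have "T (Suc n) = (\<Sum>k\<le>n+2. FF (Suc n) k)"
    unfolding T_def using FF_zero[of "Suc n" "Suc (Suc (Suc n))"] by simp
  then show ?thesis using a by simp
qed

lemma T_0: "T 0 = 1"
  unfolding T_def by (simp add: FF_def numeral_2_eq_2 pochhammer_Suc)

definition RR :: "nat \<Rightarrow> real" where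
  "RR n = (2^2 / 3^3) ^ n * (pochhammer (3/2) n)^2 / (pochhammer (4/3) n * pochhammer (2/3) n)"

lemma RR_Suc: "RR (Suc n) = rho (real n) * RR n"
proof -
  have nz: "pochhammer (4/3::real) n \<noteq> 0" "pochhammer (2/3::real) n \<noteq> 0" by (auto intro!: poch_nz)
  have nz2: "4/3 + real n \<noteq> 0" "2/3 + real n \<noteq> 0" by auto
  show ?thesis unfolding RR_def rho_def pochhammer_Suc using nz nz2
    by (simp add: field_simps power2_eq_square)
qed

lemma TR: "T n = RR n"
proof (induction n)
  case 0 then show ?case by (simp add: T_0 RR_def)
next
  case (Suc n) then show ?case by (simp add: T_Suc RR_Suc)
qed

theorem theorem2:
  fixes n :: nat
  shows "(\<Sum>k. (-1::real) ^ k * (4 * real k + 1) *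
            (pochhammer (- real n) k * pochhammer (- 2 * real n - 1/2) k * pochhammer (1/2) k) /
            (fact k * pochhammer (real n + 3/2) k * pochhammer (2 * real n + 2) k))
         = (2^2 / 3^3) ^ n * (pochhammer (3/2) n)^2 / (pochhammer (4/3) n * pochhammer (2/3) n)"
  using T_suminf[of n] TR[of n] unfolding FF_def RR_def by simp

end
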